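(* Let $g,h:[0,1]\to\mathbb{R}$ be piecewise continuous and strictly monotonic and regular. Let $0=a_{g,0}<a_{g,1}<\dots<a_{g,M_g}=1$ be the partition of $[0,1]$ given by the ordered turning points of $g$, and $0=a_{h,0}<\dots<a_{h,M_h}=1$ the analogous partition for $h$. Let $T_g=F_g\circ g$, $T_h=F_h\circ h$, where $F_g,F_h$ are the distribution functions of $g(U_0),h(U_0)$ for $U_0\sim\mathcal{U}(0,1)$, and let $S_{\max}=\{(u,v)\in[0,1]^2:T_g(u)=T_h(v)\}$ and $S_{\min}=\{(u,v)\in[0,1]^2:T_g(u)=1-T_h(v)\}$ be the support sets on which copulas attaining the maximum, respectively minimum, of $\rho_{\{g,h\}}$ are concentrated. Then for every $m_1\in\{1,\dots,M_g\}$, $m_2\in\{1,\dots,M_h\}$ and $S\in\{S_{\max},S_{\min}\}$: if the intersection of $S$ with the rectangle $(a_{g,m_1-1},a_{g,m_1})\times(a_{h,m_2-1},a_{h,m_2})$ is non-empty, then this intersection is a continuous and strictly monotonic curve on the rectangle (the graph of a continuous strictly monotonic function of $u$ on a subinterval of $(a_{g,m_1-1},a_{g,m_1})$).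
   Context: $\psi$ is piecewise continuous and strictly monotonic if there is a finite partition of $[0,1]$ such that $\psi$ is continuous and strictly monotonic on each open subinterval. $\psi$ is regular if it is continuous on $[0,1]$, continuously differentiable on $(0,1)$ with bounded derivative, and $\psi'(u)=0$ iff $u$ is a turning point (interior local extremum) of $\psi$. $\rho_{\{g,h\}}(X,Y)=\rho(g(F_X(X)),h(F_Y(Y)))$ (Pearson correlation). *)

theory Defs
  imports "HOL-Probability.Probability"
begin

definition turning_point :: "(real \<Rightarrow> real) \<Rightarrow> real \<Rightarrow> bool" where
  "turning_point psi u \<longleftrightarrow> 0 < u \<and> u < 1 \<and>
     (\<exists>e>0. (\<forall>w\<in>{0..1}. \<bar>w - u\<bar> < e \<longrightarrow> psi w \<le> psi u) \<or>
            (\<forall>w\<in>{0..1}. \<bar>w - u\<bar> < e \<longrightarrow> psi u \<le> psi w))"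

definition pw_cont_strict_mono :: "(real \<Rightarrow> real) \<Rightarrow> bool" where
  "pw_cont_strict_mono psi \<longleftrightarrow>
     (\<exists>(p :: nat \<Rightarrow> real) n. p 0 = 0 \<and> p n = 1 \<and> (\<forall>i<n. p i < p (Suc i)) \<and>
        (\<forall>i<n. continuous_on {p i<..<p (Suc i)} psi \<and>
               (strict_mono_on {p i<..<p (Suc i)} psi \<or> strict_antimono_on {p i<..<p (Suc i)} psi)))"

definition regular :: "(real \<Rightarrow> real) \<Rightarrow> bool" where
  "regular psi \<longleftrightarrow> continuous_on {0..1} psi \<and>
     (\<forall>u\<in>{0<..<1}. psi differentiable (at u)) \<and>
     continuous_on {0<..<1} (deriv psi) \<and>
     (\<exists>B. \<forall>u\<in>{0<..<1}. \<bar>deriv psi u\<bar> \<le> B) \<and>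
     (\<forall>u\<in>{0<..<1}. deriv psi u = 0 \<longleftrightarrow> turning_point psi u)"

definition tp_points :: "(real \<Rightarrow> real) \<Rightarrow> real set" where
  "tp_points psi = {0, 1} \<union> {u. turning_point psi u}"

definition tp_num :: "(real \<Rightarrow> real) \<Rightarrow> nat" where
  "tp_num psi = card (tp_points psi) - 1"

definition tp_part :: "(real \<Rightarrow> real) \<Rightarrow> nat \<Rightarrow> real" where
  "tp_part psi i = sorted_list_of_set (tp_points psi) ! i"

definition unif01 :: "real measure" where
  "unif01 = restrict_space lborel {0..1}"

definition distfun :: "(real \<Rightarrow> real) \<Rightarrow> real \<Rightarrow> real" where
  "distfun psi = cdf (distr unif01 borel psi)"

definition Tfun :: "(real \<Rightarrow> real) \<Rightarrow> real \<Rightarrow> real" where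
  "Tfun psi u = distfun psi (psi u)"

definition S_max :: "(real \<Rightarrow> real) \<Rightarrow> (real \<Rightarrow> real) \<Rightarrow> (real \<times> real) set" where
  "S_max g h = {(u, v). u \<in> {0..1} \<and> v \<in> {0..1} \<and> Tfun g u = Tfun h v}"

definition S_min :: "(real \<Rightarrow> real) \<Rightarrow> (real \<Rightarrow> real) \<Rightarrow> (real \<times> real) set" where
  "S_min g h = {(u, v). u \<in> {0..1} \<and> v \<in> {0..1} \<and> Tfun g u = 1 - Tfun h v}"

end

theory Submission
  imports Defs
begin


lemma cover_lemma:
  fixes p :: "nat \<Rightarrow> real"
  shows "p 0 \<le> w \<Longrightarrow> w \<le> p n \<Longrightarrow> (\<exists>i\<le>n. w = p i) \<or> (\<exists>i<n. p i < w \<and> w < p (Suc i))"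
proof (induction n)
  case 0 then show ?case by auto
next
  case (Suc n)
  show ?case
  proof (cases "w \<le> p n")
    case True
    from Suc.IH[OF Suc.prems(1) True]
    consider (a) i where "i \<le> n" "w = p i" | (b) i where "i < n" "p i < w" "w < p (Suc i)" by blast
    then show ?thesis
    proof cases
      case a
      then have "i \<le> Suc n" by simp
      then show ?thesis using a by blast
    next
      case b
      then have "i < Suc n" by simp
      then show ?thesis using b by blast
    qed
  next
    case False
    show ?thesis
    proof (cases "w = p (Suc n)")
      case True then show ?thesis by blast
    next
      case F2: False
      then have "p n < w \<and> w < p (Suc n)" using False Suc.prems by auto
      then show ?thesis by blast
    qed
  qed
qed

lemma subsingleton_finite: "(\<And>x y. x \<in> X \<Longrightarrow> y \<in> X \<Longrightarrow> x = y) \<Longrightarrow> finite X"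
proof (cases "X = {}")
  case False
  assume h: "\<And>x y. x \<in> X \<Longrightarrow> y \<in> X \<Longrightarrow> x = y"
  from False obtain x where "x \<in> X" by blast
  then have "X \<subseteq> {x}" using h by blast
  then show ?thesis using finite_subset by blast
qed simp

lemma level_finite:
  assumes "pw_cont_strict_mono g"
  shows "finite {w\<in>{0..1}. g w = y}"
proof -
  obtain p n where p: "p 0 = 0" "p n = (1::real)" "\<forall>i<n. p i < p (Suc i)"
    "\<forall>i<n. (strict_mono_on {p i<..<p (Suc i)} g \<or> strict_antimono_on {p i<..<p (Suc i)} g)"
    using assms unfolding pw_cont_strict_mono_def by blast
  have sub: "{w\<in>{0..1}. g w = y} \<subseteq> p ` {..n} \<union> (\<Union>i<n. {w \<in> {p i<..<p (Suc i)}. g w = y})"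
  proof
    fix w assume "w \<in> {w\<in>{0..1}. g w = y}"
    then have "p 0 \<le> w" "w \<le> p n" "g w = y" using p by auto
    from cover_lemma[OF this(1,2)] show "w \<in> p ` {..n} \<union> (\<Union>i<n. {w \<in> {p i<..<p (Suc i)}. g w = y})"
      using \<open>g w = y\<close> by auto
  qed
  have "finite {w \<in> {p i<..<p (Suc i)}. g w = y}" if "i < n" for i
  proof (rule subsingleton_finite)
    fix x z assume xz: "x \<in> {w \<in> {p i<..<p (Suc i)}. g w = y}" "z \<in> {w \<in> {p i<..<p (Suc i)}. g w = y}"
    have ne: "g x \<noteq> g z" if "x' \<in> {p i<..<p (Suc i)}" "z' \<in> {p i<..<p (Suc i)}" "x' < z'" 
      "x' = x \<and> z' = z \<or> x' = z \<and> z' = x" for x' z'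
    proof -
      have "g x' \<noteq> g z'"
        using p(4) \<open>i < n\<close>
      proof (elim allE impE disjE)
        assume m: "strict_mono_on {p i<..<p (Suc i)} g"
        show "g x' \<noteq> g z'" using monotone_onD[OF m that(1,2,3)] by simp
      next
        assume m: "strict_antimono_on {p i<..<p (Suc i)} g"
        show "g x' \<noteq> g z'" using monotone_onD[OF m that(1,2,3)] by simp
      qed simp
      then show ?thesis using that(4) by auto
    qed
    show "x = z"
    proof (rule ccontr)
      assume "x \<noteq> z"
      then consider "x < z" | "z < x" by linarith
      then show False
      proof cases
        case 1 then show False using ne[of x z] xz by auto
      next
        case 2 then show False using ne[of z x] xz by auto
      qed
    qed
  qed
  then have "finite (\<Union>i<n. {w \<in> {p i<..<p (Suc i)}. g w = y})" by simp
  then have "finite (p ` {..n} \<union> (\<Union>i<n. {w \<in> {p i<..<p (Suc i)}. g w = y}))" by simp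
  then show ?thesis using sub finite_subset by blast
qed


lemma finite_lborel_null: "finite (X :: real set) \<Longrightarrow> measure lborel X = 0"
  by (simp add: measure_def emeasure_lborel_countable countable_finite)


lemma unif01_meas: "continuous_on {0..1} g \<Longrightarrow> (g :: real \<Rightarrow> real) \<in> borel_measurable unif01"
  unfolding unif01_def
  using borel_measurable_continuous_on_restrict[of "{0..1}" g]
  by (simp add: measurable_def sets_restrict_space space_restrict_space)

lemma unif01_prob: "prob_space unif01"
  unfolding unif01_def
  by (rule prob_spaceI) (simp add: space_restrict_space emeasure_restrict_space)

lemma unif01_dist: "continuous_on {0..1} g \<Longrightarrow> real_distribution (distr unif01 borel (g :: real \<Rightarrow> real))"
  unfolding real_distribution_def real_distribution_axioms_def
  using unif01_prob unif01_meas prob_space.prob_space_distr by auto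

lemma unif01_measure: "continuous_on {0..1} g \<Longrightarrow> X \<in> sets borel \<Longrightarrow>
   measure (distr unif01 borel (g :: real \<Rightarrow> real)) X = measure lborel (g -` X \<inter> {0..1})"
  apply (subst measure_distr)
  using unif01_meas apply auto[2]
  unfolding unif01_def
  apply (subst measure_restrict_space)
  by (auto simp: space_restrict_space)

lemma unif01_sets: "continuous_on {0..1} g \<Longrightarrow> X \<in> sets borel \<Longrightarrow>
   (g :: real \<Rightarrow> real) -` X \<inter> {0..1} \<in> sets lborel"
proof -
  assume a: "continuous_on {0..1} g" "X \<in> sets borel"
  have "g -` X \<inter> space unif01 \<in> sets unif01" using measurable_sets[OF unif01_meas[OF a(1)] a(2)] .
  then show ?thesis unfolding unif01_def
    by (simp add: space_restrict_space sets_restrict_space_iff)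
qed


lemma distfun_cont:
  assumes "continuous_on {0..1} g" "pw_cont_strict_mono g"
  shows "isCont (distfun g) y"
proof -
  interpret real_distribution "distr unif01 borel g" using unif01_dist[OF assms(1)] .
  have "measure (distr unif01 borel g) {y} = 0"
  proof -
    have e: "g -` {y} \<inter> {0..1} = {w\<in>{0..1}. g w = y}" by auto
    show ?thesis
      using unif01_measure[OF assms(1), of "{y}"] level_finite[OF assms(2), of y] finite_lborel_null
      unfolding e by simp
  qed
  then show ?thesis unfolding distfun_def using isCont_cdf by blast
qed

lemma distfun_less:
  assumes "continuous_on {0..1} g" "lo < hi" "0 \<le> lo" "hi \<le> 1"
    and "\<And>w. lo < w \<Longrightarrow> w < hi \<Longrightarrow> y < g w \<and> g w \<le> y'" "y < y'"
  shows "distfun g y < distfun g y'"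
proof -
  interpret real_distribution "distr unif01 borel g" using unif01_dist[OF assms(1)] .
  have "cdf (distr unif01 borel g) y' - cdf (distr unif01 borel g) y = measure lborel (g -` {y<..y'} \<inter> {0..1})"
    using cdf_diff_eq[OF assms(6)] unif01_measure[OF assms(1), of "{y<..y'}"] by simp
  also have "\<dots> \<ge> measure lborel {lo<..<hi}"
  proof (rule measure_mono_fmeasurable)
    show "{lo<..<hi} \<subseteq> g -` {y<..y'} \<inter> {0..1}" using assms by auto
    show "{lo<..<hi} \<in> sets lborel" by simp
    have "g -` {y<..y'} \<inter> {0..1} \<in> sets lborel" using unif01_sets[OF assms(1), of "{y<..y'}"] by simp
    moreover have "emeasure lborel (g -` {y<..y'} \<inter> {0..1}) \<le> emeasure lborel {0..1::real}"
      by (rule emeasure_mono) auto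
    ultimately show "g -` {y<..y'} \<inter> {0..1} \<in> fmeasurable lborel"
      by (auto simp: fmeasurable_def top.not_eq_extremum intro: le_less_trans)
  qed
  then have "measure lborel (g -` {y<..y'} \<inter> {0..1}) > 0" using assms(2) by simp
  ultimately show ?thesis unfolding distfun_def by simp
qed


definition smo :: "real set \<Rightarrow> (real \<Rightarrow> real) \<Rightarrow> bool" where
  "smo A f \<longleftrightarrow> strict_mono_on A f \<or> strict_antimono_on A f"

lemma Tfun_props:
  assumes "continuous_on {0..1} g" "pw_cont_strict_mono g" "0 \<le> a" "b \<le> 1" "smo {a<..<b} g"
  shows "continuous_on {a<..<b} (Tfun g) \<and> smo {a<..<b} (Tfun g)"
proof
  have "continuous_on {a<..<b} (distfun g \<circ> g)"
    apply (rule continuous_on_compose)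
    using assms(1,3,4) apply (elim continuous_on_subset) apply force
    using distfun_cont[OF assms(1,2)] by (simp add: continuous_at_imp_continuous_on)
  then show "continuous_on {a<..<b} (Tfun g)" by (simp add: Tfun_def[abs_def] o_def)
  show "smo {a<..<b} (Tfun g)"
    using assms(5)[unfolded smo_def]
  proof
    assume m: "strict_mono_on {a<..<b} g"
    have "Tfun g u < Tfun g u'" if u: "u \<in> {a<..<b}" "u' \<in> {a<..<b}" "u < u'" for u u'
      unfolding Tfun_def
    proof (rule distfun_less[OF assms(1), of u u'])
      show "u < u'" "0 \<le> u" "u' \<le> 1" using u assms(3,4) by auto
      show "g u < g u'" using monotone_onD[OF m u] .
      fix w assume w: "u < w" "w < u'"
      then have wA: "w \<in> {a<..<b}" using u by auto
      show "g u < g w \<and> g w \<le> g u'"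
        using monotone_onD[OF m u(1) wA w(1)] monotone_onD[OF m wA u(2) w(2)] by simp
    qed
    then show ?thesis by (auto simp: monotone_on_def smo_def)
  next
    assume m: "strict_antimono_on {a<..<b} g"
    have "Tfun g u' < Tfun g u" if u: "u \<in> {a<..<b}" "u' \<in> {a<..<b}" "u < u'" for u u'
      unfolding Tfun_def
    proof (rule distfun_less[OF assms(1), of u u'])
      show "u < u'" "0 \<le> u" "u' \<le> 1" using u assms(3,4) by auto
      show "g u' < g u" using monotone_onD[OF m u] .
      fix w assume w: "u < w" "w < u'"
      then have wA: "w \<in> {a<..<b}" using u by auto
      show "g u' < g w \<and> g w \<le> g u"
        using monotone_onD[OF m u(1) wA w(1)] monotone_onD[OF m wA u(2) w(2)] by simp
    qed
    then show ?thesis by (auto simp: monotone_on_def smo_def)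
  qed
qed



lemma regular_smo:
  assumes "regular g" "0 \<le> a" "b \<le> 1" "\<And>u. a < u \<Longrightarrow> u < b \<Longrightarrow> \<not> turning_point g u"
  shows "smo {a<..<b} g"
proof -
  have R: "continuous_on {0..1} g" "\<forall>u\<in>{0<..<1}. g differentiable (at u)"
    "continuous_on {0<..<1} (deriv g)" "\<forall>u\<in>{0<..<1}. deriv g u = 0 \<longleftrightarrow> turning_point g u"
    using assms(1) unfolding regular_def by blast+
  have in01: "u \<in> {0<..<1}" if "a < u" "u < b" for u using that assms(2,3) by simp
  have D: "DERIV g u :> deriv g u" if "a < u" "u < b" for u
    using R(2) in01[OF that] DERIV_deriv_iff_real_differentiable by blast
  have nz: "deriv g u \<noteq> 0" if "a < u" "u < b" for u
    using R(4) in01[OF that] assms(4)[OF that] by blast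
  have sub: "{a<..<b} \<subseteq> {0<..<1}" using assms(2,3) by auto
  have cd: "continuous_on {a<..<b} (deriv g)"
    using continuous_on_subset[OF R(3) sub] .
  have cg: "continuous_on {0..1} g" using R(1) .
  have sign: "(\<forall>u\<in>{a<..<b}. deriv g u > 0) \<or> (\<forall>u\<in>{a<..<b}. deriv g u < 0)"
  proof (rule ccontr)
    assume H: "\<not> ?thesis"
    then obtain u1 where u1: "u1 \<in> {a<..<b}" "\<not> deriv g u1 > 0" by blast
    from H obtain u2 where u2: "u2 \<in> {a<..<b}" "\<not> deriv g u2 < 0" by blast
    have d1: "deriv g u1 < 0" using u1 nz[of u1] by force
    have d2: "deriv g u2 > 0" using u2 nz[of u2] by force
    have "\<exists>x\<in>{a<..<b}. deriv g x = 0"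
    proof (cases "u1 \<le> u2")
      case True
      have "continuous_on {u1..u2} (deriv g)" using cd u1 u2 by (elim continuous_on_subset) auto
      from IVT'[of "deriv g" u1 0 u2, OF _ _ True this] d1 d2 obtain x where "u1 \<le> x" "x \<le> u2" "deriv g x = 0"
        by force
      then show ?thesis using u1 u2 by (intro bexI[of _ x]) auto
    next
      case False
      then have F: "u2 \<le> u1" by simp
      have "continuous_on {u2..u1} (deriv g)" using cd u1 u2 by (elim continuous_on_subset) auto
      from IVT2'[of "deriv g" u1 0 u2, OF _ _ F this] d1 d2 obtain x where "u2 \<le> x" "x \<le> u1" "deriv g x = 0"
        by force
      then show ?thesis using u1 u2 by (intro bexI[of _ x]) auto
    qed
    then show False using nz by auto
  qed
  show ?thesis
    using sign
  proof
    assume pos: "\<forall>u\<in>{a<..<b}. deriv g u > 0"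
    have "g u < g u'" if u: "u \<in> {a<..<b}" "u' \<in> {a<..<b}" "u < u'" for u u'
    proof (rule DERIV_pos_imp_increasing_open[OF u(3)])
      fix x assume "u < x" "x < u'"
      then have "a < x" "x < b" using u by auto
      then show "\<exists>y. DERIV g x :> y \<and> y > 0" using D[of x] pos by (intro exI[of _ "deriv g x"]) auto
    next
      show "continuous_on {u..u'} g" using cg u assms(2,3) by (elim continuous_on_subset) auto
    qed
    then show ?thesis unfolding smo_def by (intro disjI1 monotone_onI) auto
  next
    assume neg: "\<forall>u\<in>{a<..<b}. deriv g u < 0"
    have "g u' < g u" if u: "u \<in> {a<..<b}" "u' \<in> {a<..<b}" "u < u'" for u u'
    proof (rule DERIV_neg_imp_decreasing_open[OF u(3)])
      fix x assume "u < x" "x < u'"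
      then have "a < x" "x < b" using u by auto
      then show "\<exists>y. DERIV g x :> y \<and> y < 0" using D[of x] neg by (intro exI[of _ "deriv g x"]) auto
    next
      show "continuous_on {u..u'} g" using cg u assms(2,3) by (elim continuous_on_subset) auto
    qed
    then show ?thesis unfolding smo_def by (intro disjI2 monotone_onI) auto
  qed
qed




lemma smo_inj: "smo A f \<Longrightarrow> inj_on f A"
proof (rule inj_onI, rule ccontr)
  fix x y assume s: "smo A f" and xy: "x \<in> A" "y \<in> A" "f x = f y" "x \<noteq> y"
  have ne: "f u \<noteq> f v" if "u \<in> A" "v \<in> A" "u < v" for u v
    using s unfolding smo_def
  proof
    assume m: "strict_mono_on A f" show ?thesis using monotone_onD[OF m that] by simp
  next
    assume m: "strict_antimono_on A f" show ?thesis using monotone_onD[OF m that] by simp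
  qed
  consider "x < y" | "y < x" using xy(4) by linarith
  then show False
  proof cases
    case 1 then show ?thesis using ne[OF xy(1,2)] xy(3) by simp
  next
    case 2 then show ?thesis using ne[OF xy(2,1)] xy(3) by simp
  qed
qed

lemma curve:
  fixes T k :: "real \<Rightarrow> real"
  assumes cT: "continuous_on A T" and sT: "smo A T" and A: "A = {a<..<b}"
    and cK: "continuous_on B k" and sK: "smo B k" and B: "B = {c<..<d}"
  shows "\<exists>I \<phi>. is_interval I \<and> I \<subseteq> A \<and> continuous_on I \<phi> \<and> smo I \<phi> \<and>
           {(u,v). u\<in>A \<and> v\<in>B \<and> T u = k v} = (\<lambda>u. (u, \<phi> u)) ` I"
proof -
  define \<psi> where "\<psi> = the_inv_into B k"
  define I where "I = {u\<in>A. T u \<in> k ` B}"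
  define \<phi> where "\<phi> = \<psi> \<circ> T"
  have injk: "inj_on k B" using sK by (rule smo_inj)
  have injT: "inj_on T A" using sT by (rule smo_inj)
  have key: "\<phi> u \<in> B \<and> k (\<phi> u) = T u" if "u \<in> I" for u
    using that injk unfolding I_def \<phi>_def \<psi>_def
    by (auto simp: the_inv_into_f_f the_inv_into_into)
  have IA: "I \<subseteq> A" unfolding I_def by auto
  have intkB: "is_interval (k ` B)"
    using cK B by (simp add: is_interval_connected_1 connected_continuous_image)
  have intI: "is_interval I"
    unfolding is_interval_1
  proof (intro ballI allI impI)
    fix u1 u2 x assume u: "u1 \<in> I" "u2 \<in> I" "u1 \<le> x \<and> x \<le> u2"
    then have xA: "x \<in> A" using A IA by auto
    have u1A: "u1 \<in> A" and u2A: "u2 \<in> A" using u IA by auto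
    have "T u1 \<le> T x \<and> T x \<le> T u2 \<or> T u2 \<le> T x \<and> T x \<le> T u1"
    proof (cases "x = u1 \<or> x = u2")
      case True then show ?thesis by auto
    next
      case False
      then have l: "u1 < x" "x < u2" using u by auto
      show ?thesis using sT unfolding smo_def
      proof
        assume m: "strict_mono_on A T"
        show ?thesis using monotone_onD[OF m u1A xA l(1)] monotone_onD[OF m xA u2A l(2)] by simp
      next
        assume m: "strict_antimono_on A T"
        show ?thesis using monotone_onD[OF m u1A xA l(1)] monotone_onD[OF m xA u2A l(2)] by simp
      qed
    qed
    then have "T x \<in> k ` B"
      using intkB u unfolding is_interval_1 I_def by blast
    then show "x \<in> I" using xA unfolding I_def by blast
  qed
  have cpsi: "isCont \<psi> (k v)" if "v \<in> B" for v
  proof -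
    define e where "e = min (v - c) (d - v) / 2"
    have e: "e > 0" using that B unfolding e_def by auto
    have zB: "z \<in> B" if "\<bar>z - v\<bar> \<le> e" for z
      using that \<open>v \<in> B\<close> B unfolding e_def by (auto; smt (verit) abs_ge_self abs_minus_commute)
    show ?thesis
    proof (rule isCont_inverse_function[where f=k and g=\<psi> and x=v, OF e])
      fix z assume "\<bar>z - v\<bar> \<le> e"
      then have "z \<in> B" by (rule zB)
      then show "\<psi> (k z) = z" unfolding \<psi>_def using injk by (simp add: the_inv_into_f_f)
      show "isCont k z" using cK \<open>z \<in> B\<close> B
        by (metis continuous_on_eq_continuous_at open_greaterThanLessThan)
    qed
  qed
  have cphi: "continuous_on I \<phi>"
    unfolding \<phi>_def
    apply (rule continuous_on_compose)
    using cT IA apply (rule continuous_on_subset)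
    apply (rule continuous_at_imp_continuous_on)
    using key cpsi by (metis imageE)
  have sphi: "smo I \<phi>"
  proof -
    have step: "\<phi> u1 \<noteq> \<phi> u2" if "u1 \<in> I" "u2 \<in> I" "u1 < u2" for u1 u2
    proof
      assume "\<phi> u1 = \<phi> u2"
      then have "T u1 = T u2" using key[OF that(1)] key[OF that(2)] by simp
      then have "u1 = u2" using injT that(1,2) IA unfolding inj_on_def by blast
      then show False using that(3) by simp
    qed
    have KI: "\<phi> u \<in> B" "k (\<phi> u) = T u" if "u \<in> I" for u using key[OF that] by auto
    have TI: "u \<in> A" if "u \<in> I" for u using that IA by auto
    consider "strict_mono_on A T" | "strict_antimono_on A T" using sT unfolding smo_def by blast
    then show ?thesis
    proof cases
      case mT: 1
      consider "strict_mono_on B k" | "strict_antimono_on B k" using sK unfolding smo_def by blast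
      then show ?thesis
      proof cases
        case mK: 1
        have "\<phi> u1 < \<phi> u2" if u: "u1 \<in> I" "u2 \<in> I" "u1 < u2" for u1 u2
        proof (rule ccontr)
          assume "\<not> \<phi> u1 < \<phi> u2"
          then have "\<phi> u2 < \<phi> u1" using step[OF u] by simp
          from monotone_onD[OF mK KI(1)[OF u(2)] KI(1)[OF u(1)] this] have "T u2 < T u1"
            using KI(2)[OF u(1)] KI(2)[OF u(2)] by simp
          moreover have "T u1 < T u2" using monotone_onD[OF mT TI[OF u(1)] TI[OF u(2)] u(3)] .
          ultimately show False by simp
        qed
        then show ?thesis unfolding smo_def by (intro disjI1 monotone_onI) auto
      next
        case mK: 2
        have "\<phi> u2 < \<phi> u1" if u: "u1 \<in> I" "u2 \<in> I" "u1 < u2" for u1 u2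
        proof (rule ccontr)
          assume "\<not> \<phi> u2 < \<phi> u1"
          then have "\<phi> u1 < \<phi> u2" using step[OF u] by simp
          from monotone_onD[OF mK KI(1)[OF u(1)] KI(1)[OF u(2)] this] have "T u2 < T u1"
            using KI(2)[OF u(1)] KI(2)[OF u(2)] by simp
          moreover have "T u1 < T u2" using monotone_onD[OF mT TI[OF u(1)] TI[OF u(2)] u(3)] .
          ultimately show False by simp
        qed
        then show ?thesis unfolding smo_def by (intro disjI2 monotone_onI) auto
      qed
    next
      case mT: 2
      consider "strict_mono_on B k" | "strict_antimono_on B k" using sK unfolding smo_def by blast
      then show ?thesis
      proof cases
        case mK: 1
        have "\<phi> u2 < \<phi> u1" if u: "u1 \<in> I" "u2 \<in> I" "u1 < u2" for u1 u2
        proof (rule ccontr)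
          assume "\<not> \<phi> u2 < \<phi> u1"
          then have "\<phi> u1 < \<phi> u2" using step[OF u] by simp
          from monotone_onD[OF mK KI(1)[OF u(1)] KI(1)[OF u(2)] this] have "T u1 < T u2"
            using KI(2)[OF u(1)] KI(2)[OF u(2)] by simp
          moreover have "T u2 < T u1" using monotone_onD[OF mT TI[OF u(1)] TI[OF u(2)] u(3)] .
          ultimately show False by simp
        qed
        then show ?thesis unfolding smo_def by (intro disjI2 monotone_onI) auto
      next
        case mK: 2
        have "\<phi> u1 < \<phi> u2" if u: "u1 \<in> I" "u2 \<in> I" "u1 < u2" for u1 u2
        proof (rule ccontr)
          assume "\<not> \<phi> u1 < \<phi> u2"
          then have "\<phi> u2 < \<phi> u1" using step[OF u] by simp
          from monotone_onD[OF mK KI(1)[OF u(2)] KI(1)[OF u(1)] this] have "T u1 < T u2"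
            using KI(2)[OF u(1)] KI(2)[OF u(2)] by simp
          moreover have "T u2 < T u1" using monotone_onD[OF mT TI[OF u(1)] TI[OF u(2)] u(3)] .
          ultimately show False by simp
        qed
        then show ?thesis unfolding smo_def by (intro disjI1 monotone_onI) auto
      qed
    qed
  qed
  have eq: "{(u,v). u\<in>A \<and> v\<in>B \<and> T u = k v} = (\<lambda>u. (u, \<phi> u)) ` I"
  proof (intro set_eqI iffI)
    fix p assume "p \<in> {(u,v). u\<in>A \<and> v\<in>B \<and> T u = k v}"
    then obtain u v where p: "p = (u, v)" "u \<in> A" "v \<in> B" "T u = k v" by blast
    then have uI: "u \<in> I" unfolding I_def by auto
    have "\<phi> u = v" unfolding \<phi>_def \<psi>_def using p injk by (simp add: the_inv_into_f_f)
    then show "p \<in> (\<lambda>u. (u, \<phi> u)) ` I" using uI p by auto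
  next
    fix p assume "p \<in> (\<lambda>u. (u, \<phi> u)) ` I"
    then obtain u where "u \<in> I" "p = (u, \<phi> u)" by blast
    then show "p \<in> {(u,v). u\<in>A \<and> v\<in>B \<and> T u = k v}" using key IA by force
  qed
  show ?thesis using intI IA cphi sphi eq by blast
qed



lemma gap:
  fixes P :: "real set"
  assumes "finite P" "P \<subseteq> {0..1}" "xs = sorted_list_of_set P" "1 \<le> m" "m < length xs"
  shows "0 \<le> xs!(m-1) \<and> xs!(m-1) < xs!m \<and> xs!m \<le> 1 \<and> (\<forall>u. xs!(m-1) < u \<and> u < xs!m \<longrightarrow> u \<notin> P)"
proof -
  have ss: "sorted_wrt (<) xs" using assms(3) by simp
  have set: "set xs = P" using assms(1,3) by simp
  have mem: "xs ! i \<in> P" if "i < length xs" for i using set that by auto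
  have lt: "xs!(m-1) < xs!m" using sorted_wrt_nth_less[OF ss, of "m-1" m] assms(4,5) by simp
  have no: "u \<notin> P" if "xs!(m-1) < u" "u < xs!m" for u
  proof
    assume "u \<in> P"
    then obtain k where k: "k < length xs" "xs!k = u" using set by (metis in_set_conv_nth)
    have "\<not> k \<le> m - 1"
    proof
      assume "k \<le> m - 1"
      then have "xs!k \<le> xs!(m-1)"
        using ss k assms(4,5) by (metis le_less sorted_wrt_nth_less less_imp_le_nat order.strict_trans1 diff_less zero_less_one)
      then show False using that k by simp
    qed
    moreover have "\<not> m \<le> k"
    proof
      assume "m \<le> k"
      then have "xs!m \<le> xs!k"
        using ss k by (metis le_less sorted_wrt_nth_less)
      then show False using that k by simp
    qed
    ultimately show False by simp
  qed
  have "xs!(m-1) \<in> P" "xs!m \<in> P" using mem assms(4,5) by auto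
  then show ?thesis using lt no assms(2) by auto
qed
lemma smo_neg: "smo B k \<Longrightarrow> smo B (\<lambda>v. 1 - k v)"
  unfolding smo_def monotone_on_def by auto

theorem proposition8:
  fixes g h :: "real \<Rightarrow> real"
  assumes "pw_cont_strict_mono g" and "regular g"
    and "pw_cont_strict_mono h" and "regular h"
    and "m1 \<in> {1..tp_num g}" and "m2 \<in> {1..tp_num h}"
    and "S \<in> {S_max g h, S_min g h}"
    and "S \<inter> ({tp_part g (m1 - 1)<..<tp_part g m1} \<times> {tp_part h (m2 - 1)<..<tp_part h m2}) \<noteq> {}"
  shows "\<exists>(I :: real set) (\<phi> :: real \<Rightarrow> real).
           is_interval I \<and> I \<subseteq> {tp_part g (m1 - 1)<..<tp_part g m1} \<and>
           continuous_on I \<phi> \<and> (strict_mono_on I \<phi> \<or> strict_antimono_on I \<phi>) \<and>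
           S \<inter> ({tp_part g (m1 - 1)<..<tp_part g m1} \<times> {tp_part h (m2 - 1)<..<tp_part h m2})
             = (\<lambda>u. (u, \<phi> u)) ` I"
proof -
  have piece: "0 \<le> tp_part f (m-1) \<and> tp_part f (m-1) < tp_part f m \<and> tp_part f m \<le> 1 \<and>
      smo {tp_part f (m-1)<..<tp_part f m} f"
    if r: "regular f" and m: "m \<in> {1..tp_num f}" for f m
  proof -
    have c: "card (tp_points f) \<ge> 2" using m unfolding tp_num_def by auto
    then have fin: "finite (tp_points f)" using card.infinite by fastforce
    have sub: "tp_points f \<subseteq> {0..1}" unfolding tp_points_def turning_point_def by auto
    have len: "m < length (sorted_list_of_set (tp_points f))" using m c fin unfolding tp_num_def by auto
    have G: "0 \<le> tp_part f (m-1) \<and> tp_part f (m-1) < tp_part f m \<and> tp_part f m \<le> 1 \<and>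
      (\<forall>u. tp_part f (m-1) < u \<and> u < tp_part f m \<longrightarrow> u \<notin> tp_points f)"
      using gap[OF fin sub refl, of m] m len unfolding tp_part_def by auto
    have "smo {tp_part f (m-1)<..<tp_part f m} f"
      apply (rule regular_smo[OF r])
      using G unfolding tp_points_def by auto
    then show ?thesis using G by blast
  qed
  define a where "a = tp_part g (m1 - 1)"
  define b where "b = tp_part g m1"
  define c where "c = tp_part h (m2 - 1)"
  define d where "d = tp_part h m2"
  have pg: "0 \<le> a" "a < b" "b \<le> 1" "smo {a<..<b} g" using piece[OF assms(2,5)] unfolding a_def b_def by auto
  have ph: "0 \<le> c" "c < d" "d \<le> 1" "smo {c<..<d} h" using piece[OF assms(4,6)] unfolding c_def d_def by auto
  have cg: "continuous_on {0..1} g" using assms(2) unfolding regular_def by simp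
  have ch: "continuous_on {0..1} h" using assms(4) unfolding regular_def by simp
  have Tg: "continuous_on {a<..<b} (Tfun g) \<and> smo {a<..<b} (Tfun g)"
    using Tfun_props[OF cg assms(1) pg(1) pg(3) pg(4)] .
  have Th: "continuous_on {c<..<d} (Tfun h) \<and> smo {c<..<d} (Tfun h)"
    using Tfun_props[OF ch assms(3) ph(1) ph(3) ph(4)] .
  obtain k where k: "continuous_on {c<..<d} k" "smo {c<..<d} k"
    "S \<inter> ({a<..<b} \<times> {c<..<d}) = {(u,v). u\<in>{a<..<b} \<and> v\<in>{c<..<d} \<and> Tfun g u = k v}"
  proof (cases "S = S_max g h")
    case True
    show ?thesis
      apply (rule that[of "Tfun h"])
      using Th apply auto[2]
      unfolding True S_max_def using pg ph by auto
  next
    case False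
    then have S: "S = S_min g h" using assms(7) by auto
    show ?thesis
      apply (rule that[of "\<lambda>v. 1 - Tfun h v"])
      using Th apply (auto intro: continuous_intros)[1]
      using Th smo_neg apply blast
      unfolding S S_min_def using pg ph by auto
  qed
  obtain I \<phi> where "is_interval I" "I \<subseteq> {a<..<b}" "continuous_on I \<phi>" "smo I \<phi>"
    "{(u,v). u\<in>{a<..<b} \<and> v\<in>{c<..<d} \<and> Tfun g u = k v} = (\<lambda>u. (u, \<phi> u)) ` I"
    using curve[OF conjunct1[OF Tg] conjunct2[OF Tg] refl k(1,2) refl] by blast
  then show ?thesis using k(3) unfolding a_def b_def c_def d_def smo_def by metis
qed


end
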